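(* Under the standing setup, for every $u\in\widetilde X$ there exists $z^*\in\mathbb{R}^m$ with $\|z^*\|\le\|u-u_{NN}\|$ and \[\tilde g_i(z^*,u)\le-\frac{\varepsilon}{60}\|u-u_{NN}\|\quad\forall\,i=1,\ldots,2\ell.\]
   Context: Norms are Euclidean. Standing setup: $X\subseteq\mathbb{R}^d$ has reach $\tau_X>0$, where $\tau_X=\sup\{t\ge0:\text{every }x\text{ with }d(x,X)<t\text{ has a unique closest point in }\overline X\}$; $\widetilde X=X+B(0,\tau_X/2)$; for $u\in\widetilde X$, $u_{NN}$ is the unique closest point to $u$ in $\overline X$. $\varepsilon\in(0,1)$. $S_X=\overline{\{(x-y)/\|x-y\|:x\ne y\in X\}}$. A linear $\Pi\colon\mathbb{R}^d\to\mathbb{R}^m$ provides $\eta$-convex hull distortion for $T\subseteq S^{d-1}$ if $|\,\|\Pi x\|-\|x\|\,|<\eta$ for all $x\in\operatorname{conv}(T)$. $\{w_1,\ldots,w_\ell\}\subseteq S_X$ is finite; $\Pi\in\mathbb{R}^{m\times d}$ provides $\frac{\varepsilon}{60}$-convex hull distortion for $S_X$ (e.g. it provides $\frac{\varepsilon}{240}$-convex hull distortion). For $z\in\mathbb{R}^m$, $u\in\widetilde X$, $i=1,\ldots,\ell$: $\tilde g_i(z,u)=\langle z,\Pi w_i\rangle-\langle u-u_{NN},w_i\rangle-\frac{\varepsilon}{30}\|u-u_{NN}\|$, $\tilde g_{\ell+i}(z,u)=\langle u-u_{NN},w_i\rangle-\langle z,\Pi w_i\rangle-\frac{\varepsilon}{30}\|u-u_{NN}\|$.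 *)

theory Defs
  imports "HOL-Analysis.Analysis"
begin

text \<open>Reach of a set (as an extended real, since it may be infinite): the supremum of all
  t \<ge> 0 such that every point at distance < t from X has a unique closest point in the
  closure of X.\<close>
definition unique_closest :: "'a::euclidean_space set \<Rightarrow> 'a \<Rightarrow> bool" where
  "unique_closest X x \<longleftrightarrow> (\<exists>!y. y \<in> closure X \<and> (\<forall>z\<in>closure X. dist x y \<le> dist x z))"

definition reach :: "'a::euclidean_space set \<Rightarrow> ereal" where
  "reach X = Sup {ereal t | t. t \<ge> 0 \<and>
      (\<forall>x. infdist x X < t \<longrightarrow> unique_closest X x)}"

definition tube :: "'a::euclidean_space set \<Rightarrow> 'a set" where
  "tube X = {x + v | x v. x \<in> X \<and> ereal (norm v) < reach X / 2}"

definition nn :: "'a::euclidean_space set \<Rightarrow> 'a \<Rightarrow> 'a" where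
  "nn X u = (THE y. y \<in> closure X \<and> (\<forall>z\<in>closure X. dist u y \<le> dist u z))"

definition secants :: "'a::euclidean_space set \<Rightarrow> 'a set" where
  "secants X = closure {(1 / norm (x - y)) *\<^sub>R (x - y) | x y. x \<in> X \<and> y \<in> X \<and> x \<noteq> y}"

definition convex_hull_distortion ::
    "('a::euclidean_space \<Rightarrow> 'b::euclidean_space) \<Rightarrow> real \<Rightarrow> 'a set \<Rightarrow> bool" where
  "convex_hull_distortion Proj eta T \<longleftrightarrow>
     (\<forall>x\<in>convex hull T. \<bar>norm (Proj x) - norm x\<bar> < eta)"

definition g_tilde ::
    "'a::euclidean_space set \<Rightarrow> ('a \<Rightarrow> 'b::euclidean_space) \<Rightarrow> (nat \<Rightarrow> 'a) \<Rightarrow> nat \<Rightarrow> real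
      \<Rightarrow> nat \<Rightarrow> 'b \<Rightarrow> 'a \<Rightarrow> real" where
  "g_tilde X Proj w l eps i z u =
     (if i \<le> l then
        inner z (Proj (w i)) - inner (u - nn X u) (w i) - eps / 30 * norm (u - nn X u)
      else
        inner (u - nn X u) (w (i - l)) - inner z (Proj (w (i - l))) - eps / 30 * norm (u - nn X u))"

end

theory Submission
  imports Defs
begin

lemma secants_neg:
  fixes X :: "'a::euclidean_space set"
  assumes "s \<in> secants X" shows "- s \<in> secants X"
proof -
  let ?S = "{(1 / norm (x - y)) *\<^sub>R (x - y) | x y. x \<in> X \<and> y \<in> X \<and> x \<noteq> y}"
  have lin: "linear (uminus :: 'a \<Rightarrow> 'a)" by (rule linear_uminus)
  have eq: "uminus ` ?S = ?S"
  proof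
    show "uminus ` ?S \<subseteq> ?S"
    proof
      fix t assume "t \<in> uminus ` ?S"
      then obtain x y where xy: "x \<in> X" "y \<in> X" "x \<noteq> y" "t = - ((1 / norm (x - y)) *\<^sub>R (x - y))" by blast
      have "t = (1 / norm (y - x)) *\<^sub>R (y - x)" using xy(4) by (simp add: norm_minus_commute algebra_simps)
      then show "t \<in> ?S" using xy by blast
    qed
    note sub = this
    show "?S \<subseteq> uminus ` ?S"
    proof
      fix t assume t: "t \<in> ?S"
      then have "- t \<in> ?S" using sub by blast
      moreover have "t = - (- t)" by simp
      ultimately show "t \<in> uminus ` ?S" by (rule rev_image_eqI)
    qed
  qed
  have "- s \<in> uminus ` closure ?S" using assms unfolding secants_def by blast
  also have "\<dots> \<subseteq> closure (uminus ` ?S)" by (rule closure_linear_image_subset[OF lin])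
  finally show ?thesis unfolding secants_def eq .
qed

lemma compact_secants:
  fixes X :: "'a::euclidean_space set"
  shows "compact (secants X)"
proof -
  let ?S = "{(1 / norm (x - y)) *\<^sub>R (x - y) | x y. x \<in> X \<and> y \<in> X \<and> x \<noteq> y}"
  have "?S \<subseteq> cball 0 1" by auto
  then have "bounded ?S" using bounded_cball bounded_subset by blast
  then show ?thesis unfolding secants_def by (simp add: compact_eq_bounded_closed bounded_closure)
qed

lemma key:
  fixes Proj :: "'a::euclidean_space \<Rightarrow> 'b::euclidean_space"
  assumes lin: "linear Proj" and A: "convex A" "compact A" "A \<noteq> {}"
    and eta: "\<forall>a\<in>A. norm a < norm (Proj a) + eta"
    and r: "r = norm v" "r > 0"
  shows "\<exists>z. norm z \<le> r \<and> (\<forall>a\<in>A. inner z (Proj a) - inner v a < eta * r)"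
proof -
  define f where "f a = (Proj a, inner v a)" for a
  have linf: "linear f" unfolding f_def
    by (rule bounded_linear.linear[OF bounded_linear_Pair[OF lin[unfolded linear_conv_bounded_linear] bounded_linear_inner_right]])
  define W where "W = f ` A"
  define C where "C = {(p::'b, t::real). t + r * norm p + eta * r \<le> 0}"
  have cW: "convex W" unfolding W_def using convex_linear_image[OF linf A(1)] .
  have kW: "compact W" unfolding W_def
    using compact_continuous_image[OF linear_continuous_on[OF linf[unfolded linear_conv_bounded_linear]] A(2)] .
  have nW: "W \<noteq> {}" using A(3) W_def by auto
  have cC: "convex C" unfolding C_def convex_def
  proof (clarsimp)
    fix p p' :: 'b and t t' u v :: real
    assume h: "t + r * norm p + eta * r \<le> 0" "t' + r * norm p' + eta * r \<le> 0"
      "0 \<le> u" "0 \<le> v" "u + v = 1"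
    have "norm (u *\<^sub>R p + v *\<^sub>R p') \<le> u * norm p + v * norm p'"
      using norm_triangle_ineq[of "u *\<^sub>R p" "v *\<^sub>R p'"] h(3,4) by simp
    then have "r * norm (u *\<^sub>R p + v *\<^sub>R p') \<le> r * (u * norm p + v * norm p')"
      using r(2) by (intro mult_left_mono) auto
    then have "r * norm (u *\<^sub>R p + v *\<^sub>R p') \<le> u * (r * norm p) + v * (r * norm p')"
      by (simp add: algebra_simps)
    moreover have "u * (t + r * norm p + eta * r) + v * (t' + r * norm p' + eta * r) \<le> 0"
      using h by (simp add: mult_nonneg_nonpos add_nonpos_nonpos)
    moreover have "eta * r = u * (eta * r) + v * (eta * r)"
      using h(5) by (metis distrib_right mult_1)
    moreover have "u * (t + r * norm p + eta * r) + v * (t' + r * norm p' + eta * r)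
       = u * t + v * t' + (u * (r * norm p) + v * (r * norm p')) + (u * (eta * r) + v * (eta * r))"
      by (simp add: distrib_left)
    ultimately show "u * t + v * t' + r * norm (u *\<^sub>R p + v *\<^sub>R p') + eta * r \<le> 0"
      by linarith
  qed
  have clC: "closed C"
  proof -
    have "C = {x. (\<lambda>x. snd x + r * norm (fst x) + eta * r) x \<le> (\<lambda>x. 0) x}"
      unfolding C_def by auto
    also have "closed \<dots>"
      by (intro closed_Collect_le continuous_intros)
    finally show ?thesis .
  qed
  have disj: "C \<inter> W = {}"
  proof (rule ccontr)
    assume "C \<inter> W \<noteq> {}"
    then obtain a where a: "a \<in> A" "inner v a + r * norm (Proj a) + eta * r \<le> 0"
      unfolding C_def W_def f_def by auto
    have "- inner v a \<le> r * norm a" using norm_cauchy_schwarz[of "-v" a] r(1)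
      by (simp add: inner_minus_left)
    moreover have "r * norm a < r * (norm (Proj a) + eta)" using eta a(1) r(2) by simp
    ultimately show False using a(2) by (simp add: algebra_simps)
  qed
  obtain c b where sep: "\<forall>x\<in>C. inner c x < b" "\<forall>x\<in>W. inner c x > b"
    using separating_hyperplane_closed_compact[OF cC clC cW kW nW disj] by blast
  obtain c1 c0 where c: "c = (c1, c0)" by (cases c)
  have inC: "(p, - eta * r - r * norm p - s) \<in> C" if "s \<ge> 0" for p s
    using that unfolding C_def by simp
  have Cineq: "inner c1 p + c0 * (- eta * r - r * norm p - s) < b" if "s \<ge> 0" for p s
  proof -
    have "inner c (p, - eta * r - r * norm p - s) < b" using sep(1) inC[OF that, of p] by blast
    then show ?thesis using c by simp
  qed
  have c0ge: "c0 \<ge> 0"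
  proof (rule ccontr)
    assume "\<not> c0 \<ge> 0"
    then have neg: "c0 < 0" by simp
    define s where "s = (\<bar>b\<bar> + \<bar>c0 * eta * r\<bar> + 1) / (- c0)"
    have s0: "s \<ge> 0" unfolding s_def using neg by (intro divide_nonneg_pos) auto
    have "c0 * s = - (\<bar>b\<bar> + \<bar>c0 * eta * r\<bar> + 1)" unfolding s_def using neg by simp
    then show False using Cineq[OF s0, of 0] by (simp add: algebra_simps)
  qed
  have c0pos: "c0 > 0"
  proof (rule ccontr)
    assume "\<not> c0 > 0"
    then have z: "c0 = 0" using c0ge by simp
    have lt: "inner c1 p < b" for p using Cineq[of 0 p] z by simp
    show False
    proof (cases "c1 = 0")
      case True
      obtain a where "a \<in> A" using A(3) by blast
      then have "f a \<in> W" unfolding W_def by simp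
      then have "inner c (f a) > b" using sep(2) by blast
      then show False using lt[of 0] True z c by (simp add: f_def)
    next
      case False
      then have n: "inner c1 c1 > 0" by simp
      have "inner c1 (((\<bar>b\<bar> + 1) / inner c1 c1) *\<^sub>R c1) = \<bar>b\<bar> + 1"
        using n by simp
      then show False using lt[of "((\<bar>b\<bar> + 1) / inner c1 c1) *\<^sub>R c1"] by simp
    qed
  qed
  have nc1: "norm c1 \<le> c0 * r"
  proof (rule ccontr)
    assume "\<not> norm c1 \<le> c0 * r"
    then have g: "norm c1 - c0 * r > 0" by simp
    have "c0 * r > 0" using c0pos r(2) by simp
    then have nz: "norm c1 > 0" using g by linarith
    define k where "k = (\<bar>b + c0 * eta * r\<bar> + 1) / (norm c1 * (norm c1 - c0 * r))"
    have kpos: "k > 0" unfolding k_def using g nz by simp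
    have A: "inner c1 (k *\<^sub>R c1) + c0 * (- eta * r - r * norm (k *\<^sub>R c1) - 0) < b"
      using Cineq[of 0 "k *\<^sub>R c1"] by simp
    have e1: "inner c1 (k *\<^sub>R c1) = k * (norm c1 * norm c1)"
      by (simp add: dot_square_norm power2_eq_square)
    have e2: "norm (k *\<^sub>R c1) = k * norm c1" using kpos by simp
    from A have "k * (norm c1 * norm c1) + c0 * (- eta * r - r * (k * norm c1) - 0) < b"
      by (simp only: e1 e2)
    then have "k * (norm c1 * (norm c1 - c0 * r)) < b + c0 * eta * r"
      by (simp add: algebra_simps)
    moreover have "k * (norm c1 * (norm c1 - c0 * r)) = \<bar>b + c0 * eta * r\<bar> + 1"
      unfolding k_def using g nz by simp
    ultimately show False by simp
  qed
  define z where "z = - (1 / c0) *\<^sub>R c1"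
  have "norm z \<le> r" unfolding z_def using nc1 c0pos
    by (simp add: field_simps)
  moreover have "inner z (Proj a) - inner v a < eta * r" if a: "a \<in> A" for a
  proof -
    have "f a \<in> W" unfolding W_def using a by simp
    then have "inner c (f a) > b" using sep(2) by blast
    then have h1: "inner c1 (Proj a) + c0 * inner v a > b" using c by (simp add: f_def)
    have h2: "c0 * (- eta * r) < b" using Cineq[of 0 0] by simp
    have "c0 * (inner z (Proj a) - inner v a) = - (inner c1 (Proj a) + c0 * inner v a)"
      unfolding z_def using c0pos by (simp add: algebra_simps)
    also have "\<dots> < c0 * (eta * r)" using h1 h2 by simp
    finally show ?thesis using c0pos by simp
  qed
  ultimately show ?thesis by blast
qed

theorem lemma4p3:
  fixes X :: "'a::euclidean_space set"
    and Proj :: "'a \<Rightarrow> 'b::euclidean_space"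
    and w :: "nat \<Rightarrow> 'a"
    and l :: nat
    and eps :: real
    and u :: 'a
  assumes reach_pos: "reach X > 0"
    and eps: "0 < eps" "eps < 1"
    and w: "\<forall>i\<in>{1..l}. w i \<in> secants X"
    and lin: "linear Proj"
    and dist: "convex_hull_distortion Proj (eps / 60) (secants X)"
    and u: "u \<in> tube X"
  shows "\<exists>z. norm z \<le> norm (u - nn X u) \<and>
    (\<forall>i\<in>{1..2*l}. g_tilde X Proj w l eps i z u \<le> - (eps / 60) * norm (u - nn X u))"
proof -
  define v where "v = u - nn X u"
  define r where "r = norm v"
  show ?thesis
  proof (cases "r = 0 \<or> secants X = {}")
    case True
    show ?thesis
    proof (cases "r = 0")
      case True
      then show ?thesis by (intro exI[of _ 0]) (simp add: g_tilde_def v_def r_def)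
    next
      case False
      have "l = 0"
      proof (rule ccontr)
        assume "l \<noteq> 0"
        then have "(1::nat) \<in> {1..l}" by simp
        then show False using True False w by blast
      qed
      then show ?thesis by (intro exI[of _ 0]) auto
    qed
  next
    case False
    then have rpos: "r > 0" and ne: "secants X \<noteq> {}" using r_def by auto
    define A where "A = convex hull (secants X)"
    have "\<exists>z. norm z \<le> r \<and> (\<forall>a\<in>A. inner z (Proj a) - inner v a < (eps/60) * r)"
    proof (rule key[OF lin])
      show "convex A" unfolding A_def by simp
      show "compact A" unfolding A_def by (simp add: compact_convex_hull compact_secants)
      show "A \<noteq> {}" unfolding A_def using ne by simp
      show "\<forall>a\<in>A. norm a < norm (Proj a) + eps / 60"
      proof
        fix a assume "a \<in> A"
        then have "\<bar>norm (Proj a) - norm a\<bar> < eps / 60"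
          using dist unfolding convex_hull_distortion_def A_def by blast
        then show "norm a < norm (Proj a) + eps / 60" by linarith
      qed
    qed (use rpos r_def in auto)
    then obtain z where z: "norm z \<le> r" "\<And>a. a \<in> A \<Longrightarrow> inner z (Proj a) - inner v a < (eps/60) * r"
      by blast
    have wA: "w i \<in> A" "- w i \<in> A" if "i \<in> {1..l}" for i
    proof -
      have s: "w i \<in> secants X" using w that by blast
      show "w i \<in> A" unfolding A_def using s hull_subset[of "secants X" convex] by (rule subsetD[rotated])
      show "- w i \<in> A" unfolding A_def using secants_neg[OF s] hull_subset[of "secants X" convex] by (rule subsetD[rotated])
    qed
    have G: "g_tilde X Proj w l eps i z u \<le> - (eps / 60) * r" if i: "i \<in> {1..2*l}" for i
    proof (cases "i \<le> l")
      case True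
      then have "i \<in> {1..l}" using i by simp
      from z(2)[OF wA(1)[OF this]] show ?thesis
        using True unfolding g_tilde_def v_def[symmetric] r_def[symmetric] by simp
    next
      case False
      then have "i - l \<in> {1..l}" using i by auto
      from z(2)[OF wA(2)[OF this]] show ?thesis
        using False linear_neg[OF lin] unfolding g_tilde_def v_def[symmetric] r_def[symmetric]
        by (simp add: inner_minus_right)
    qed
    have N: "norm z \<le> norm (u - nn X u)" using z(1) unfolding r_def v_def .
    have "\<forall>i\<in>{1..2*l}. g_tilde X Proj w l eps i z u \<le> - (eps / 60) * norm (u - nn X u)"
      using G unfolding r_def v_def by blast
    with N show ?thesis by blast
  qed
qed

end
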